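(* Let $d_1\leq d_2$ and let $X$ be a positive semidefinite matrix in $\mathcal{M}_{d_1}\otimes\mathcal{M}_{d_2}$, written as $X=\sum_{i,j=1}^{d_1}\ket{i}\bra{j}\otimes X_{ij}$ with blocks $X_{ij}\in\mathcal{M}_{d_2}$. If $\mathrm{SN}(X)=k\geq 2$, then there exist distinct indices $m_1,\ldots,m_{d_1-k+2}\in\{1,\ldots,d_1\}$ such that the principal sub-block matrix \[ Y=\sum_{s,t=1}^{d_1-k+2}\ket{s}\bra{t}\otimes X_{m_sm_t}\in\mathcal{M}_{d_1-k+2}\otimes\mathcal{M}_{d_2} \] (which is positive semidefinite) is entangled.
   Context: $\mathcal{M}_d$: complex $d\times d$ matrices. A positive semidefinite $W\in\mathcal{M}_{a}\otimes\mathcal{M}_{b}$ is separable if it is a finite sum $\sum_i P_i\otimes Q_i$ with $P_i,Q_i$ positive semidefinite, and entangled otherwise. The Schmidt rank of $\ket{\psi}\in\mathbb{C}^{a}\otimes\mathbb{C}^{b}$ is the rank of $\mathrm{tr}_A\ket{\psi}\bra{\psi}$; for a nonzero positive semidefinite $W$, $\mathrm{SN}(W)$ is the minimum over decompositions $W=\sum_ip_i\ket{\psi_i}\bra{\psi_i}$ ($p_i>0$) of the maximal Schmidt rank of the $\ket{\psi_i}$. *)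

theory Defs
  imports "Jordan_Normal_Form.DL_Rank"
begin

text \<open>The tensor
  product basis vector |i> (x) |p> of C^a (x) C^b (0-based indices) is identified
  with the basis vector with index i * b + p of C^(a*b).\<close>

definition psd :: "nat \<Rightarrow> complex mat \<Rightarrow> bool" where
  "psd n A \<longleftrightarrow> A \<in> carrier_mat n n \<and>
     (\<forall>v \<in> carrier_vec n.
        let z = (\<Sum>i<n. \<Sum>j<n. cnj (v $ i) * A $$ (i, j) * v $ j) in Im z = 0 \<and> Re z \<ge> 0)"

definition kron :: "complex mat \<Rightarrow> complex mat \<Rightarrow> complex mat" where
  "kron A B = mat (dim_row A * dim_row B) (dim_col A * dim_col B)
     (\<lambda>(i, j). A $$ (i div dim_row B, j div dim_col B) * B $$ (i mod dim_row B, j mod dim_col B))"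

definition separable :: "nat \<Rightarrow> nat \<Rightarrow> complex mat \<Rightarrow> bool" where
  "separable a b W \<longleftrightarrow> psd (a * b) W \<and>
     (\<exists>ps :: (complex mat \<times> complex mat) list.
        (\<forall>(P, Q) \<in> set ps. psd a P \<and> psd b Q) \<and>
        W = foldr (\<lambda>(P, Q) acc. kron P Q + acc) ps (0\<^sub>m (a * b) (a * b)))"

definition entangled :: "nat \<Rightarrow> nat \<Rightarrow> complex mat \<Rightarrow> bool" where
  "entangled a b W \<longleftrightarrow> psd (a * b) W \<and> \<not> separable a b W"

definition outer :: "complex vec \<Rightarrow> complex mat" where
  "outer v = mat (dim_vec v) (dim_vec v) (\<lambda>(i, j). v $ i * cnj (v $ j))"

definition ptrace_A :: "nat \<Rightarrow> nat \<Rightarrow> complex mat \<Rightarrow> complex mat" where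
  "ptrace_A a b M = mat b b (\<lambda>(p, q). \<Sum>i<a. M $$ (i * b + p, i * b + q))"

definition schmidt_rank :: "nat \<Rightarrow> nat \<Rightarrow> complex vec \<Rightarrow> nat" where
  "schmidt_rank a b v = vec_space.rank b (ptrace_A a b (outer v))"

definition schmidt_number :: "nat \<Rightarrow> nat \<Rightarrow> complex mat \<Rightarrow> nat" where
  "schmidt_number a b W = (LEAST k. \<exists>ds :: (real \<times> complex vec) list.
      (\<forall>(p, v) \<in> set ds. p > 0 \<and> v \<in> carrier_vec (a * b) \<and> schmidt_rank a b v \<le> k) \<and>
      W = foldr (\<lambda>(p, v) acc. complex_of_real p \<cdot>\<^sub>m outer v + acc) ds (0\<^sub>m (a * b) (a * b)))"

definition principal_subblock :: "nat \<Rightarrow> nat \<Rightarrow> (nat \<Rightarrow> nat) \<Rightarrow> complex mat \<Rightarrow> complex mat" where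
  "principal_subblock n d2 m X = mat (n * d2) (n * d2)
     (\<lambda>(i, j). X $$ (m (i div d2) * d2 + i mod d2, m (j div d2) * d2 + j mod d2))"

end

theory Submission
  imports Defs
begin

definition qf :: "nat set \<Rightarrow> (nat \<Rightarrow> nat \<Rightarrow> complex) \<Rightarrow> (nat \<Rightarrow> complex) \<Rightarrow> complex" where
  "qf I A v = (\<Sum>i\<in>I. \<Sum>j\<in>I. cnj (v i) * A i j * v j)"

definition psdS :: "nat set \<Rightarrow> (nat \<Rightarrow> nat \<Rightarrow> complex) \<Rightarrow> bool" where
  "psdS I A \<longleftrightarrow> (\<forall>v. Im (qf I A v) = 0 \<and> 0 \<le> Re (qf I A v))"

lemma qf_supp:
  assumes "finite I" "J \<subseteq> I" "\<And>i. i \<notin> J \<Longrightarrow> v i = 0"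
  shows "qf I A v = qf J A v"
proof -
  have "qf I A v = (\<Sum>i\<in>J. \<Sum>j\<in>I. cnj (v i) * A i j * v j)"
    unfolding qf_def by (rule sum.mono_neutral_right) (use assms in \<open>auto intro: finite_subset\<close>)
  also have "\<dots> = (\<Sum>i\<in>J. \<Sum>j\<in>J. cnj (v i) * A i j * v j)"
    by (rule sum.cong[OF refl], rule sum.mono_neutral_right) (use assms in \<open>auto intro: finite_subset\<close>)
  finally show ?thesis unfolding qf_def .
qed

lemma psdS_mono:
  assumes "finite I" "J \<subseteq> I" "psdS I A"
  shows "psdS J A"
  unfolding psdS_def
proof
  fix v :: "nat \<Rightarrow> complex"
  define w where "w = (\<lambda>i. if i \<in> J then v i else (0::complex))"
  have "qf I A w = qf J A w" by (rule qf_supp) (use assms in \<open>auto simp: w_def\<close>)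
  also have "\<dots> = qf J A v" unfolding qf_def w_def by (rule sum.cong, simp, rule sum.cong, auto)
  finally show "Im (qf J A v) = 0 \<and> 0 \<le> Re (qf J A v)" using assms(3) unfolding psdS_def by metis
qed

lemma qf_two:
  assumes "finite I" "i \<in> I" "j \<in> I" "i \<noteq> j"
  shows "qf I A (\<lambda>x. if x = i then a else if x = j then b else 0)
     = cnj a * A i i * a + cnj a * A i j * b + cnj b * A j i * a + cnj b * A j j * b"
proof -
  have "qf I A (\<lambda>x. if x = i then a else if x = j then b else 0)
      = qf {i, j} A (\<lambda>x. if x = i then a else if x = j then b else 0)"
    by (rule qf_supp) (use assms in auto)
  also have "\<dots> = cnj a * A i i * a + cnj a * A i j * b + cnj b * A j i * a + cnj b * A j j * b"
    unfolding qf_def using assms(4) by (simp add: algebra_simps)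
  finally show ?thesis .
qed

lemma qf_one:
  assumes "finite I" "i \<in> I"
  shows "qf I A (\<lambda>x. if x = i then a else 0) = cnj a * A i i * a"
proof -
  have "qf I A (\<lambda>x. if x = i then a else 0) = qf {i} A (\<lambda>x. if x = i then a else 0)"
    by (rule qf_supp) (use assms in auto)
  then show ?thesis unfolding qf_def by simp
qed

lemma psdS_diag_real:
  assumes "finite I" "psdS I A" "i \<in> I"
  shows "Im (A i i) = 0" "0 \<le> Re (A i i)"
  using assms(2) qf_one[OF assms(1,3), of A 1] unfolding psdS_def by (metis mult_1 mult_1_right complex_cnj_one)+

lemma psdS_herm:
  assumes "finite I" "psdS I A" "i \<in> I" "j \<in> I"
  shows "A j i = cnj (A i j)"
proof (cases "i = j")
  case True
  then show ?thesis using psdS_diag_real[OF assms(1,2,3)] by (simp add: complex_eq_iff)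
next
  case False
  have 1: "Im (qf I A (\<lambda>x. if x = i then 1 else if x = j then 1 else 0)) = 0"
    using assms(2) unfolding psdS_def by blast
  have 2: "Im (qf I A (\<lambda>x. if x = i then 1 else if x = j then \<i> else 0)) = 0"
    using assms(2) unfolding psdS_def by blast
  have di: "Im (A i i) = 0" "Im (A j j) = 0"
    using psdS_diag_real(1)[OF assms(1,2)] assms(3,4) by auto
  from 1 2 di show ?thesis
    unfolding qf_two[OF assms(1,3,4) False] by (simp add: complex_eq_iff algebra_simps)
qed

lemma psdS_zero_row:
  assumes "finite I" "psdS I A" "q \<in> I" "j \<in> I" "A q q = 0"
  shows "A q j = 0"
proof (rule ccontr)
  assume c0: "A q j \<noteq> 0"
  then have qj: "q \<noteq> j" using assms(5) by auto
  define c where "c = A q j"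
  have cn: "0 < (cmod c)^2" using c0 c_def by simp
  define s where "s = (Re (A j j) + 1) / (2 * (cmod c)^2)"
  define t where "t = - complex_of_real s * c"
  have h: "A j q = cnj c" using psdS_herm[OF assms(1,2,3,4)] c_def by simp
  have "0 \<le> Re (qf I A (\<lambda>x. if x = q then t else if x = j then 1 else 0))"
    using assms(2) unfolding psdS_def by blast
  also have "Re (qf I A (\<lambda>x. if x = q then t else if x = j then 1 else 0))
     = - 2 * s * ((Re c)^2 + (Im c)^2) + Re (A j j)"
    unfolding qf_two[OF assms(1,3,4) qj] using assms(5) h
    by (simp add: t_def c_def[symmetric] algebra_simps power2_eq_square)
  also have "\<dots> = - 2 * s * (cmod c)^2 + Re (A j j)" by (simp add: cmod_power2)
  also have "\<dots> = -1" using cn by (simp add: s_def field_simps)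
  finally show False by simp
qed

lemma sum_delta_r:
  fixes c :: complex
  assumes "finite I" "q \<in> I"
  shows "(\<Sum>j\<in>I. f j * (if j = q then c else 0)) = f q * c"
proof -
  have "(\<Sum>j\<in>I. f j * (if j = q then c else 0)) = (\<Sum>j\<in>I. if j = q then f q * c else 0)"
    by (rule sum.cong) auto
  then show ?thesis using assms by simp
qed

lemma sum_delta_l:
  fixes c :: complex
  assumes "finite I" "q \<in> I"
  shows "(\<Sum>j\<in>I. (if j = q then c else 0) * f j) = c * f q"
proof -
  have "(\<Sum>j\<in>I. (if j = q then c else 0) * f j) = (\<Sum>j\<in>I. if j = q then c * f q else 0)"
    by (rule sum.cong) auto
  then show ?thesis using assms by simp
qed

lemma qf_add_delta:
  assumes "finite I" "q \<in> I"
  shows "qf I A (\<lambda>i. v i + (if i = q then c else 0)) = qf I A v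
     + c * (\<Sum>i\<in>I. cnj (v i) * A i q) + cnj c * (\<Sum>j\<in>I. A q j * v j) + cnj c * A q q * c"
proof -
  have "qf I A (\<lambda>i. v i + (if i = q then c else 0)) =
     (\<Sum>i\<in>I. (\<Sum>j\<in>I. cnj (v i) * A i j * v j) + (\<Sum>j\<in>I. (cnj (v i) * A i j) * (if j = q then c else 0))
        + (\<Sum>j\<in>I. (if i = q then cnj c else 0) * (A i j * v j))
        + (\<Sum>j\<in>I. ((if i = q then cnj c else 0) * A i j) * (if j = q then c else 0)))"
    unfolding qf_def by (rule sum.cong[OF refl]) (simp only: sum.distrib[symmetric], rule sum.cong[OF refl], simp add: distrib_left distrib_right mult.assoc)
  also have "\<dots> = (\<Sum>i\<in>I. (\<Sum>j\<in>I. cnj (v i) * A i j * v j) + cnj (v i) * A i q * c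
        + (if i = q then cnj c else 0) * (\<Sum>j\<in>I. A i j * v j)
        + (if i = q then cnj c else 0) * (A i q * c))"
    by (rule sum.cong[OF refl]) (simp add: sum_delta_r[OF assms] sum_distrib_left[symmetric] mult.assoc)
  also have "\<dots> = qf I A v + (\<Sum>i\<in>I. cnj (v i) * A i q * c) + cnj c * (\<Sum>j\<in>I. A q j * v j)
     + cnj c * A q q * c"
    unfolding qf_def by (simp add: sum.distrib sum_delta_l[OF assms])
  finally show ?thesis by (simp add: sum_distrib_left sum_distrib_right algebra_simps)
qed

lemma psdS_schur:
  assumes "finite I" "psdS I A" "q \<in> I" "A q q \<noteq> 0"
  shows "psdS I (\<lambda>i j. A i j - A i q * A q j / A q q)"
  unfolding psdS_def
proof
  fix v :: "nat \<Rightarrow> complex"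
  define a where "a = A q q"
  define s where "s = (\<Sum>j\<in>I. A q j * v j)"
  define \<alpha> where "\<alpha> = - s / a"
  have ar: "cnj a = a" using psdS_diag_real(1)[OF assms(1-3)] a_def by (simp add: complex_eq_iff)
  have s': "(\<Sum>i\<in>I. cnj (v i) * A i q) = cnj s"
    unfolding s_def using psdS_herm[OF assms(1,2,3)] by (simp add: mult.commute)
  have "qf I (\<lambda>i j. A i j - A i q * A q j / A q q) v
      = qf I A v - (\<Sum>i\<in>I. \<Sum>j\<in>I. cnj (v i) * A i q * (A q j * v j) / a)"
    unfolding qf_def a_def by (simp add: sum_subtractf algebra_simps diff_divide_distrib)
  also have "\<dots> = qf I A v - (\<Sum>i\<in>I. cnj (v i) * A i q * s / a)"
    unfolding s_def by (simp add: sum_distrib_left sum_divide_distrib mult.assoc)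
  also have "\<dots> = qf I A v - (\<Sum>i\<in>I. cnj (v i) * A i q) * s / a"
    by (simp add: sum_distrib_right sum_divide_distrib)
  also have "\<dots> = qf I A v - cnj s * s / a" using s' by simp
  also have "\<dots> = qf I A (\<lambda>i. v i + (if i = q then \<alpha> else 0))"
    unfolding qf_add_delta[OF assms(1,3)] s' s_def[symmetric] a_def[symmetric]
    using assms(4) ar unfolding \<alpha>_def a_def[symmetric] by (simp add: field_simps)
  finally show "Im (qf I (\<lambda>i j. A i j - A i q * A q j / A q q) v) = 0 \<and>
        0 \<le> Re (qf I (\<lambda>i j. A i j - A i q * A q j / A q q) v)"
    using assms(2) unfolding psdS_def by simp
qed

lemma psdS_solve:
  assumes "finite J"
  shows "p \<notin> J \<Longrightarrow> psdS (insert p J) A \<Longrightarrow> \<exists>x. \<forall>i\<in>J. (\<Sum>j\<in>J. A i j * x j) = A i p"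
  using assms
proof (induction J arbitrary: A rule: finite_induct)
  case empty
  then show ?case by simp
next
  case (insert q J0)
  let ?I = "insert p (insert q J0)"
  have fI: "finite ?I" using insert by simp
  have pJ0: "p \<notin> J0" and pq: "p \<noteq> q" using insert by auto
  show ?case
  proof (cases "A q q = 0")
    case True
    have row: "\<And>j. j \<in> ?I \<Longrightarrow> A q j = 0"
      using psdS_zero_row[OF fI insert.prems(2) _ _ True] by simp
    have "psdS (insert p J0) A" by (rule psdS_mono[OF fI _ insert.prems(2)]) auto
    then obtain x where x: "\<forall>i\<in>J0. (\<Sum>j\<in>J0. A i j * x j) = A i p"
      using insert.IH[OF pJ0] by blast
    define x2 where "x2 = x(q := 0)"
    have e: "\<And>i. (\<Sum>j\<in>insert q J0. A i j * x2 j) = (\<Sum>j\<in>J0. A i j * x j)"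
      using insert(1,2) by (simp add: x2_def, intro sum.cong) auto
    show ?thesis
      by (rule exI[of _ x2]) (use x row e in auto)
  next
    case False
    define A' where "A' = (\<lambda>i j. A i j - A i q * A q j / A q q)"
    have "psdS ?I A'" unfolding A'_def by (rule psdS_schur[OF fI insert.prems(2) _ False]) simp
    then have "psdS (insert p J0) A'" by (rule psdS_mono[OF fI, rotated]) auto
    then obtain x where x: "\<forall>i\<in>J0. (\<Sum>j\<in>J0. A' i j * x j) = A' i p"
      using insert.IH[OF pJ0] by blast
    define x2 where "x2 = x(q := (A q p - (\<Sum>j\<in>J0. A q j * x j)) / A q q)"
    have e: "\<And>i. (\<Sum>j\<in>insert q J0. A i j * x2 j) = A i q * x2 q + (\<Sum>j\<in>J0. A i j * x j)"
      using insert(1,2) by (simp add: x2_def, intro sum.cong) auto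
    have x2q: "x2 q = (A q p - (\<Sum>j\<in>J0. A q j * x j)) / A q q" by (simp add: x2_def)
    have "\<forall>i\<in>insert q J0. (\<Sum>j\<in>insert q J0. A i j * x2 j) = A i p"
    proof
      fix i assume i: "i \<in> insert q J0"
      show "(\<Sum>j\<in>insert q J0. A i j * x2 j) = A i p"
      proof (cases "i = q")
        case True
        then show ?thesis unfolding e x2q using False by (simp add: field_simps)
      next
        case iq: False
        then have iJ: "i \<in> J0" using i by simp
        have "(\<Sum>j\<in>J0. A i j * x j) = (\<Sum>j\<in>J0. A' i j * x j) + A i q / A q q * (\<Sum>j\<in>J0. A q j * x j)"
          unfolding A'_def by (simp add: sum_distrib_left sum.distrib[symmetric] algebra_simps)
        also have "\<dots> = A' i p + A i q / A q q * (\<Sum>j\<in>J0. A q j * x j)" using x iJ by simp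
        finally have h: "(\<Sum>j\<in>J0. A i j * x j) = A' i p + A i q / A q q * (\<Sum>j\<in>J0. A q j * x j)" .
        show ?thesis unfolding e x2q h unfolding A'_def using False
          by (simp add: field_simps)
      qed
    qed
    then show ?thesis by blast
  qed
qed


definition dec :: "nat set \<Rightarrow> (nat \<Rightarrow> nat \<Rightarrow> complex) \<Rightarrow> nat \<Rightarrow> (nat \<Rightarrow> nat \<Rightarrow> complex) \<Rightarrow> bool" where
  "dec J A T U \<longleftrightarrow> (\<forall>i\<in>J. \<forall>j\<in>J. A i j = (\<Sum>t<T. U t i * cnj (U t j)))"

lemma dec_extend1:
  assumes "finite J" "p \<notin> J" "psdS (insert p J) A" "dec J A T U"
  shows "\<exists>U'. dec (insert p J) A (Suc T) U' \<and> (\<forall>t<T. \<forall>j\<in>J. U' t j = U t j) \<and> (\<forall>j\<in>J. U' T j = 0)"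
proof -
  have fI: "finite (insert p J)" using assms by simp
  obtain x where x: "\<forall>i\<in>J. (\<Sum>j\<in>J. A i j * x j) = A i p"
    using psdS_solve[OF assms(1,2,3)] by blast
  have herm: "\<And>i j. i \<in> insert p J \<Longrightarrow> j \<in> insert p J \<Longrightarrow> A j i = cnj (A i j)"
    using psdS_herm[OF fI assms(3)] by blast
  have AJ: "\<And>i j. i \<in> J \<Longrightarrow> j \<in> J \<Longrightarrow> A i j = (\<Sum>t<T. U t i * cnj (U t j))"
    using assms(4) unfolding dec_def by blast
  define lm where "lm = (\<lambda>t. \<Sum>i\<in>J. U t i * cnj (x i))"
  have cl: "\<And>t. cnj (lm t) = (\<Sum>j\<in>J. cnj (U t j) * x j)" unfolding lm_def by simp
  define G where "G = (\<Sum>i\<in>J. \<Sum>j\<in>J. cnj (x i) * A i j * x j)"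
  define Q where "Q = (\<Sum>t<T. lm t * cnj (lm t))"
  have F1: "\<And>i. i \<in> J \<Longrightarrow> (\<Sum>t<T. U t i * cnj (lm t)) = A i p"
  proof -
    fix i assume i: "i \<in> J"
    have "(\<Sum>t<T. U t i * cnj (lm t)) = (\<Sum>t<T. \<Sum>j\<in>J. U t i * cnj (U t j) * x j)"
      unfolding cl by (simp add: sum_distrib_left mult.assoc)
    also have "\<dots> = (\<Sum>j\<in>J. \<Sum>t<T. U t i * cnj (U t j) * x j)" by (rule sum.swap)
    also have "\<dots> = (\<Sum>j\<in>J. A i j * x j)"
      by (rule sum.cong[OF refl]) (simp add: AJ[OF i] sum_distrib_right)
    also have "\<dots> = A i p" using x i by simp
    finally show "(\<Sum>t<T. U t i * cnj (lm t)) = A i p" .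
  qed
  have F2: "\<And>j. j \<in> J \<Longrightarrow> (\<Sum>t<T. lm t * cnj (U t j)) = A p j"
  proof -
    fix j assume j: "j \<in> J"
    have "(\<Sum>t<T. lm t * cnj (U t j)) = cnj (\<Sum>t<T. U t j * cnj (lm t))"
      by (simp add: mult.commute)
    also have "\<dots> = cnj (A j p)" using F1[OF j] by simp
    also have "\<dots> = A p j" using herm[of j p] j by simp
    finally show "(\<Sum>t<T. lm t * cnj (U t j)) = A p j" .
  qed
  have QG: "Q = G"
  proof -
    have "Q = (\<Sum>t<T. \<Sum>i\<in>J. \<Sum>j\<in>J. cnj (x i) * (U t i * cnj (U t j)) * x j)"
      unfolding Q_def cl unfolding lm_def
      by (simp add: sum_distrib_left sum_distrib_right algebra_simps)
    also have "\<dots> = (\<Sum>i\<in>J. \<Sum>t<T. \<Sum>j\<in>J. cnj (x i) * (U t i * cnj (U t j)) * x j)"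
      by (rule sum.swap)
    also have "\<dots> = (\<Sum>i\<in>J. \<Sum>j\<in>J. \<Sum>t<T. cnj (x i) * (U t i * cnj (U t j)) * x j)"
      by (rule sum.cong[OF refl], rule sum.swap)
    also have "\<dots> = G" unfolding G_def
      by (intro sum.cong refl) (simp add: AJ sum_distrib_left sum_distrib_right)
    finally show ?thesis .
  qed
  have Qr: "Q = complex_of_real (\<Sum>t<T. (Re (lm t))^2 + (Im (lm t))^2)"
    unfolding Q_def by (simp add: complex_mult_cnj)
  define w where "w = (\<lambda>i. if i = p then - 1 else x i)"
  have B: "(\<Sum>i\<in>J. cnj (x i) * A i p) = G"
    unfolding G_def by (rule sum.cong[OF refl]) (simp add: x sum_distrib_left[symmetric] mult.assoc)
  have B': "(\<Sum>j\<in>J. A p j * x j) = cnj G"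
  proof -
    have "(\<Sum>j\<in>J. A p j * x j) = (\<Sum>j\<in>J. cnj (cnj (x j) * A j p))"
    proof (rule sum.cong[OF refl])
      fix j assume "j \<in> J"
      then have "A p j = cnj (A j p)" using herm[of j p] by simp
      then show "A p j * x j = cnj (cnj (x j) * A j p)" by (simp add: mult.commute)
    qed
    also have "\<dots> = cnj (\<Sum>j\<in>J. cnj (x j) * A j p)" by simp
    finally have "(\<Sum>j\<in>J. A p j * x j) = cnj (\<Sum>j\<in>J. cnj (x j) * A j p)" .
    then show ?thesis using B by simp
  qed
  have "qf (insert p J) A w = A p p - cnj G - G + G"
  proof -
    have wp: "w p = -1" and wJ: "\<And>i. i \<in> J \<Longrightarrow> w i = x i" using assms(2) by (auto simp: w_def)
    have "qf (insert p J) A w = A p p - (\<Sum>j\<in>J. A p j * x j) - (\<Sum>i\<in>J. cnj (x i) * A i p)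
       + (\<Sum>i\<in>J. \<Sum>j\<in>J. cnj (x i) * A i j * x j)"
      unfolding qf_def using assms(1,2) wp wJ
      by (simp add: sum.distrib sum_negf cong: sum.cong) (simp add: algebra_simps sum_subtractf)
    then show ?thesis unfolding B B' G_def by simp
  qed
  then have qw: "qf (insert p J) A w = A p p - Q" using QG Qr by (simp add: complex_eq_iff)
  define r where "r = Re (A p p - Q)"
  have r0: "0 \<le> r" and rr: "A p p - Q = complex_of_real r"
    using assms(3) qw unfolding psdS_def r_def by (metis, simp add: complex_eq_iff)
  define U' where "U' = (\<lambda>t. if t < T then (U t)(p := lm t)
     else (\<lambda>i. if i = p then complex_of_real (sqrt r) else 0))"
  have U'1: "\<And>t i. t < T \<Longrightarrow> i \<in> J \<Longrightarrow> U' t i = U t i" using assms(2) by (auto simp: U'_def)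
  have U'2: "\<And>t. t < T \<Longrightarrow> U' t p = lm t" by (auto simp: U'_def)
  have U'3: "\<And>i. i \<in> J \<Longrightarrow> U' T i = 0" using assms(2) by (auto simp: U'_def)
  have U'4: "U' T p = complex_of_real (sqrt r)" by (auto simp: U'_def)
  have "dec (insert p J) A (Suc T) U'"
    unfolding dec_def
  proof (intro ballI)
    fix i j assume i: "i \<in> insert p J" and j: "j \<in> insert p J"
    have S: "(\<Sum>t<Suc T. U' t i * cnj (U' t j)) = (\<Sum>t<T. U' t i * cnj (U' t j)) + U' T i * cnj (U' T j)"
      by simp
    show "A i j = (\<Sum>t<Suc T. U' t i * cnj (U' t j))"
    proof (cases "i = p")
      case True
      show ?thesis
      proof (cases "j = p")
        case True
        have "(\<Sum>t<T. U' t i * cnj (U' t j)) = Q" unfolding Q_def using \<open>i = p\<close> True U'2 by simp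
        moreover have "U' T i * cnj (U' T j) = complex_of_real r"
          using \<open>i = p\<close> True U'4 r0 by (simp flip: of_real_mult)
        ultimately show ?thesis using S rr \<open>i = p\<close> True by (simp add: algebra_simps)
      next
        case False
        then have jJ: "j \<in> J" using j by simp
        have "(\<Sum>t<T. U' t i * cnj (U' t j)) = A p j" using F2[OF jJ] \<open>i = p\<close> U'1 U'2 jJ by simp
        then show ?thesis using S U'3[OF jJ] \<open>i = p\<close> by simp
      qed
    next
      case False
      then have iJ: "i \<in> J" using i by simp
      show ?thesis
      proof (cases "j = p")
        case True
        have "(\<Sum>t<T. U' t i * cnj (U' t j)) = A i p" using F1[OF iJ] True U'1 U'2 iJ by simp
        then show ?thesis using S U'3[OF iJ] True by simp
      next
        case False
        then have jJ: "j \<in> J" using j by simp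
        have "(\<Sum>t<T. U' t i * cnj (U' t j)) = A i j" using AJ[OF iJ jJ] U'1 iJ jJ by simp
        then show ?thesis using S U'3[OF iJ] by simp
      qed
    qed
  qed
  then show ?thesis using U'1 U'3 by blast
qed


lemma sum_list_nth_conv: "sum_list (map f us) = (\<Sum>t<length us. f (us ! t))"
  by (simp add: sum_list_sum_nth atLeast0LessThan)

definition decL :: "nat set \<Rightarrow> (nat \<Rightarrow> nat \<Rightarrow> complex) \<Rightarrow> (nat \<Rightarrow> complex) list \<Rightarrow> bool" where
  "decL J A us \<longleftrightarrow> (\<forall>i\<in>J. \<forall>j\<in>J. A i j = (\<Sum>u\<leftarrow>us. u i * cnj (u j)))"

lemma decL_dec: "decL J A us \<longleftrightarrow> dec J A (length us) (\<lambda>t. us ! t)"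
  unfolding decL_def dec_def sum_list_nth_conv ..

lemma dec_cong: "(\<And>t. t < T \<Longrightarrow> U t = V t) \<Longrightarrow> dec J A T U \<longleftrightarrow> dec J A T V"
proof -
  assume h: "\<And>t. t < T \<Longrightarrow> U t = V t"
  have "\<And>i j. (\<Sum>t<T. U t i * cnj (U t j)) = (\<Sum>t<T. V t i * cnj (V t j))"
    by (rule sum.cong) (auto simp: h)
  then show ?thesis unfolding dec_def by simp
qed

lemma decL_extend:
  assumes "finite K" "finite J" "J \<inter> K = {}" "psdS (J \<union> K) A" "decL J A us"
  shows "\<exists>vs ws. decL (J \<union> K) A (vs @ ws) \<and> list_all2 (\<lambda>u v. \<forall>j\<in>J. v j = u j) us vs
           \<and> (\<forall>w\<in>set ws. \<forall>j\<in>J. w j = 0)"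
  using assms
proof (induction K rule: finite_induct)
  case empty
  then show ?case by (intro exI[of _ us] exI[of _ "[]"]) (auto simp: list_all2_conv_all_nth)
next
  case (insert p K0)
  have fJK: "finite (J \<union> K0)" using insert by simp
  have "psdS (J \<union> K0) A"
    by (rule psdS_mono[of "J \<union> insert p K0"]) (use insert in auto)
  then obtain vs ws where IH: "decL (J \<union> K0) A (vs @ ws)" "list_all2 (\<lambda>u v. \<forall>j\<in>J. v j = u j) us vs"
     "\<forall>w\<in>set ws. \<forall>j\<in>J. w j = 0"
    using insert.IH insert.prems by blast
  have pn: "p \<notin> J \<union> K0" using insert by auto
  have ps: "psdS (insert p (J \<union> K0)) A" using insert.prems(3) by (simp add: insert_commute)
  obtain U' where U': "dec (insert p (J \<union> K0)) A (Suc (length (vs @ ws))) U'"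
    "\<forall>t<length (vs @ ws). \<forall>j\<in>J \<union> K0. U' t j = ((vs @ ws) ! t) j"
    "\<forall>j\<in>J \<union> K0. U' (length (vs @ ws)) j = 0"
    using dec_extend1[OF fJK pn ps IH(1)[unfolded decL_dec]] by blast
  define L where "L = length (vs @ ws)"
  define vs' where "vs' = map U' [0..<length vs]"
  define ws' where "ws' = map U' [length vs..<Suc L]"
  have eq: "vs' @ ws' = map U' [0..<Suc L]"
  proof -
    have "length vs \<le> Suc L" unfolding L_def by simp
    then have "[0..<Suc L] = [0..<length vs] @ [length vs..<Suc L]"
      using upt_add_eq_append[of 0 "length vs" "Suc L - length vs"] by simp
    then show ?thesis unfolding vs'_def ws'_def by simp
  qed
  have "decL (J \<union> insert p K0) A (vs' @ ws')"
  proof -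
    have "dec (insert p (J \<union> K0)) A (length (map U' [0..<Suc L])) (\<lambda>t. map U' [0..<Suc L] ! t)"
      using U'(1) unfolding L_def by (subst dec_cong[where V = U']) (auto simp del: upt_Suc)
    then show ?thesis unfolding decL_dec eq by (simp add: insert_commute del: upt_Suc)
  qed
  moreover have "list_all2 (\<lambda>u v. \<forall>j\<in>J. v j = u j) us vs'"
    using IH(2) U'(2) unfolding vs'_def
    by (auto simp: list_all2_conv_all_nth nth_append)
  moreover have "\<forall>w\<in>set ws'. \<forall>j\<in>J. w j = 0"
  proof (intro ballI)
    fix w j assume w: "w \<in> set ws'" and j: "j \<in> J"
    then obtain t where t: "length vs \<le> t" "t < Suc L" "w = U' t" unfolding ws'_def by auto
    show "w j = 0"
    proof (cases "t < L")
      case True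
      then have "w j = (ws ! (t - length vs)) j" using U'(2) t j unfolding L_def by (simp add: nth_append)
      moreover have "ws ! (t - length vs) \<in> set ws" using True t unfolding L_def by simp
      ultimately show ?thesis using IH(3) j by simp
    next
      case False
      then have "t = L" using t by simp
      then show ?thesis using U'(3) t j unfolding L_def by simp
    qed
  qed
  ultimately show ?case by blast
qed


lemma rank_sum_outer:
  assumes "finite S"
  shows "vec_space.rank b (mat b b (\<lambda>(p, q). \<Sum>i\<in>S. f i p * cnj (f i q))) \<le> card S"
  using assms
proof (induction S rule: finite_induct)
  case empty
  have e0: "mat b b (\<lambda>(p, q). \<Sum>i\<in>{}. f i p * cnj (f i q)) = 0\<^sub>m b b" by (rule eq_matI) auto
  show ?case unfolding e0 by (simp add: vec_space.rank_0I)
next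
  case (insert i S)
  have e: "mat b b (\<lambda>(p, q). \<Sum>i'\<in>insert i S. f i' p * cnj (f i' q))
     = mat b b (\<lambda>(p, q). f i p * cnj (f i q)) + mat b b (\<lambda>(p, q). \<Sum>i'\<in>S. f i' p * cnj (f i' q))"
    by (rule eq_matI) (use insert in auto)
  have r1: "vec_space.rank b (mat b b (\<lambda>(p, q). f i p * cnj (f i q))) \<le> 1"
    by (rule vec_space.rank_le_1_product_entries[where f="f i" and g="\<lambda>q. cnj (f i q)"]) auto
  have "vec_space.rank b (mat b b (\<lambda>(p, q). \<Sum>i'\<in>insert i S. f i' p * cnj (f i' q)))
     \<le> vec_space.rank b (mat b b (\<lambda>(p, q). f i p * cnj (f i q))) + vec_space.rank b (mat b b (\<lambda>(p, q). \<Sum>i'\<in>S. f i' p * cnj (f i' q)))"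
    unfolding e by (rule vec_space.rank_subadditive) auto
  then show ?case using r1 insert by simp
qed

lemma idx_lt:
  fixes i p a b :: nat
  assumes "i < a" "p < b"
  shows "i * b + p < a * b"
proof -
  have "Suc i * b \<le> a * b" using assms(1) by (intro mult_le_mono1) simp
  then show ?thesis using assms(2) by simp
qed

lemma ptrace_outer:
  "ptrace_A a b (outer (vec (a * b) u)) = mat b b (\<lambda>(p, q). \<Sum>i<a. u (i * b + p) * cnj (u (i * b + q)))"
  unfolding ptrace_A_def outer_def
  by (rule eq_matI) (auto intro!: sum.cong simp: idx_lt)

lemma sr_le_a: "schmidt_rank a b (vec (a * b) u) \<le> a"
  unfolding schmidt_rank_def ptrace_outer
  using rank_sum_outer[where S="{..<a}" and b=b and f="\<lambda>i p. u (i * b + p)"] by simp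

definition good :: "nat \<Rightarrow> nat \<Rightarrow> (nat \<Rightarrow> complex) \<Rightarrow> bool" where
  "good n b u \<longleftrightarrow> (\<exists>\<alpha> \<beta>. \<forall>i<n. \<forall>p<b. u (i * b + p) = \<alpha> i * \<beta> p)"

lemma sr_good:
  assumes "n \<le> a" "good n b u"
  shows "schmidt_rank a b (vec (a * b) u) \<le> 1 + (a - n)"
proof -
  obtain \<alpha> \<beta> where ab: "\<And>i p. i < n \<Longrightarrow> p < b \<Longrightarrow> u (i * b + p) = \<alpha> i * \<beta> p"
    using assms(2) unfolding good_def by blast
  define c where "c = (\<Sum>i<n. \<alpha> i * cnj (\<alpha> i))"
  have split: "{..<a} = {..<n} \<union> {n..<a}" using assms(1) by auto
  have e: "mat b b (\<lambda>(p, q). \<Sum>i<a. u (i * b + p) * cnj (u (i * b + q)))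
    = mat b b (\<lambda>(p, q). (c * \<beta> p) * cnj (\<beta> q)) + mat b b (\<lambda>(p, q). \<Sum>i\<in>{n..<a}. u (i * b + p) * cnj (u (i * b + q)))"
  proof (rule eq_matI)
    fix p q assume pq: "p < dim_row (mat b b (\<lambda>(p, q). (c * \<beta> p) * cnj (\<beta> q)) + mat b b (\<lambda>(p, q). \<Sum>i\<in>{n..<a}. u (i * b + p) * cnj (u (i * b + q))))"
      "q < dim_col (mat b b (\<lambda>(p, q). (c * \<beta> p) * cnj (\<beta> q)) + mat b b (\<lambda>(p, q). \<Sum>i\<in>{n..<a}. u (i * b + p) * cnj (u (i * b + q))))"
    then have p: "p < b" and q: "q < b" by auto
    have "(\<Sum>i<a. u (i * b + p) * cnj (u (i * b + q))) =
       (\<Sum>i<n. u (i * b + p) * cnj (u (i * b + q))) + (\<Sum>i\<in>{n..<a}. u (i * b + p) * cnj (u (i * b + q)))"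
      unfolding split by (rule sum.union_disjoint) auto
    also have "(\<Sum>i<n. u (i * b + p) * cnj (u (i * b + q))) = c * \<beta> p * cnj (\<beta> q)"
      unfolding c_def sum_distrib_right using p q by (intro sum.cong) (auto simp: ab)
    finally show "mat b b (\<lambda>(p, q). \<Sum>i<a. u (i * b + p) * cnj (u (i * b + q))) $$ (p, q) =
      (mat b b (\<lambda>(p, q). (c * \<beta> p) * cnj (\<beta> q)) + mat b b (\<lambda>(p, q). \<Sum>i\<in>{n..<a}. u (i * b + p) * cnj (u (i * b + q)))) $$ (p, q)"
      using p q by simp
  qed auto
  have r1: "vec_space.rank b (mat b b (\<lambda>(p, q). (c * \<beta> p) * cnj (\<beta> q))) \<le> 1"
    by (rule vec_space.rank_le_1_product_entries[where f="\<lambda>p. c * \<beta> p" and g="\<lambda>q. cnj (\<beta> q)"]) auto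
  have r2: "vec_space.rank b (mat b b (\<lambda>(p, q). \<Sum>i\<in>{n..<a}. u (i * b + p) * cnj (u (i * b + q)))) \<le> a - n"
    using rank_sum_outer[where S="{n..<a}" and b=b and f="\<lambda>i p. u (i * b + p)"] by simp
  have "schmidt_rank a b (vec (a * b) u) \<le> vec_space.rank b (mat b b (\<lambda>(p, q). (c * \<beta> p) * cnj (\<beta> q)))
     + vec_space.rank b (mat b b (\<lambda>(p, q). \<Sum>i\<in>{n..<a}. u (i * b + p) * cnj (u (i * b + q))))"
    unfolding schmidt_rank_def ptrace_outer e by (rule vec_space.rank_subadditive) auto
  then show ?thesis using r1 r2 by simp
qed

lemma foldr_outer_list:
  "foldr (\<lambda>(p, v) acc. complex_of_real p \<cdot>\<^sub>m outer v + acc) (map (\<lambda>u. (1, vec N u)) us) (0\<^sub>m N N)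
   = mat N N (\<lambda>(i, j). \<Sum>u\<leftarrow>us. u i * cnj (u j))"
proof (induction us)
  case Nil
  then show ?case by (auto intro!: eq_matI)
next
  case (Cons u us)
  show ?case unfolding list.map foldr_Cons o_def Cons
    by (rule eq_matI) (auto simp: outer_def)
qed

lemma foldr_kron:
  assumes "\<forall>(P, Q)\<in>set ps. P \<in> carrier_mat n n \<and> Q \<in> carrier_mat d d"
  shows "foldr (\<lambda>(P, Q) acc. kron P Q + acc) ps (0\<^sub>m (n * d) (n * d))
     = mat (n * d) (n * d) (\<lambda>(i, j). \<Sum>(P, Q)\<leftarrow>ps. P $$ (i div d, j div d) * Q $$ (i mod d, j mod d))"
  using assms
proof (induction ps)
  case Nil
  then show ?case by (auto intro!: eq_matI)
next
  case (Cons pq ps)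
  obtain P Q where pq: "pq = (P, Q)" by fastforce
  have PQ: "P \<in> carrier_mat n n" "Q \<in> carrier_mat d d" using Cons.prems pq by auto
  show ?case unfolding pq list.map foldr_Cons o_def using Cons PQ
    by (intro eq_matI) (auto simp: kron_def pq)
qed

lemma psd_psdS:
  assumes "psd n P"
  shows "psdS {..<n} (\<lambda>i j. P $$ (i, j))"
  unfolding psdS_def
proof
  fix v :: "nat \<Rightarrow> complex"
  have "vec n v \<in> carrier_vec n" by simp
  then have h: "Im (\<Sum>i<n. \<Sum>j<n. cnj (vec n v $ i) * P $$ (i, j) * vec n v $ j) = 0 \<and>
     0 \<le> Re (\<Sum>i<n. \<Sum>j<n. cnj (vec n v $ i) * P $$ (i, j) * vec n v $ j)"
    using assms unfolding psd_def Let_def by blast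
  have "(\<Sum>i<n. \<Sum>j<n. cnj (vec n v $ i) * P $$ (i, j) * vec n v $ j) = qf {..<n} (\<lambda>i j. P $$ (i, j)) v"
    unfolding qf_def by (intro sum.cong) auto
  then show "Im (qf {..<n} (\<lambda>i j. P $$ (i, j)) v) = 0 \<and> 0 \<le> Re (qf {..<n} (\<lambda>i j. P $$ (i, j)) v)"
    using h by simp
qed

lemma psdS_decomp:
  assumes "psdS {..<n} A"
  shows "\<exists>ws. decL {..<n} A ws"
proof -
  have "decL {} A []" unfolding decL_def by simp
  have "\<exists>vs ws. decL ({} \<union> {..<n}) A (vs @ ws) \<and> list_all2 (\<lambda>u v. \<forall>j\<in>{}. v j = u j) [] vs
           \<and> (\<forall>w\<in>set ws. \<forall>j\<in>{}. w j = 0)"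
    by (rule decL_extend) (use assms \<open>decL {} A []\<close> in auto)
  then show ?thesis by auto
qed

lemma sum_list_comp:
  "(\<Sum>u\<leftarrow>[g a b. a \<leftarrow> as, b \<leftarrow> bs]. f u) = (\<Sum>a\<leftarrow>as. \<Sum>b\<leftarrow>bs. f (g a b))"
  by (induction as) (simp_all add: o_def)

lemma sep_decomp:
  assumes "\<forall>(P, Q)\<in>set ps. psd n P \<and> psd d Q"
  shows "\<exists>us. (\<forall>u\<in>set us. good n d u) \<and> (\<forall>i<n * d. \<forall>j<n * d.
     (\<Sum>(P, Q)\<leftarrow>ps. P $$ (i div d, j div d) * Q $$ (i mod d, j mod d)) = (\<Sum>u\<leftarrow>us. u i * cnj (u j)))"
  using assms
proof (induction ps)
  case Nil
  then show ?case by (intro exI[of _ "[]"]) simp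
next
  case (Cons pq ps)
  obtain P Q where pq: "pq = (P, Q)" by fastforce
  have PQ: "psd n P" "psd d Q" using Cons.prems pq by auto
  obtain us where us: "\<forall>u\<in>set us. good n d u" "\<forall>i<n * d. \<forall>j<n * d.
     (\<Sum>(P, Q)\<leftarrow>ps. P $$ (i div d, j div d) * Q $$ (i mod d, j mod d)) = (\<Sum>u\<leftarrow>us. u i * cnj (u j))"
    using Cons by auto
  obtain as where as: "decL {..<n} (\<lambda>i j. P $$ (i, j)) as" using psdS_decomp[OF psd_psdS[OF PQ(1)]] by blast
  obtain bs where bs: "decL {..<d} (\<lambda>i j. Q $$ (i, j)) bs" using psdS_decomp[OF psd_psdS[OF PQ(2)]] by blast
  define g where "g = (\<lambda>a b (i::nat). a (i div d) * b (i mod d) :: complex)"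
  define us' where "us' = [g a b. a \<leftarrow> as, b \<leftarrow> bs] @ us"
  have gg: "good n d (g a b)" for a b
    unfolding good_def g_def by (rule exI[of _ a], rule exI[of _ b]) simp
  have good: "\<forall>u\<in>set us'. good n d u"
    using us(1) gg unfolding us'_def by auto
  have "\<forall>i<n * d. \<forall>j<n * d.
     (\<Sum>(P, Q)\<leftarrow>pq # ps. P $$ (i div d, j div d) * Q $$ (i mod d, j mod d)) = (\<Sum>u\<leftarrow>us'. u i * cnj (u j))"
  proof (intro allI impI)
    fix i j assume i: "i < n * d" and j: "j < n * d"
    then have d0: "0 < d" by (cases d) auto
    have ij: "i div d < n" "j div d < n" "i mod d < d" "j mod d < d"
      using i j d0 by (auto simp: less_mult_imp_div_less mult.commute)
    have "P $$ (i div d, j div d) * Q $$ (i mod d, j mod d)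
       = (\<Sum>a\<leftarrow>as. a (i div d) * cnj (a (j div d))) * (\<Sum>b\<leftarrow>bs. b (i mod d) * cnj (b (j mod d)))"
      using as bs ij unfolding decL_def by simp
    also have "\<dots> = (\<Sum>a\<leftarrow>as. a (i div d) * cnj (a (j div d)) * (\<Sum>b\<leftarrow>bs. b (i mod d) * cnj (b (j mod d))))"
      by (rule sum_list_mult_const[symmetric])
    also have "\<dots> = (\<Sum>a\<leftarrow>as. \<Sum>b\<leftarrow>bs. g a b i * cnj (g a b j))"
      by (rule arg_cong[where f=sum_list], rule map_cong[OF refl])
        (simp add: sum_list_const_mult[symmetric] g_def algebra_simps)
    also have "\<dots> = (\<Sum>u\<leftarrow>[g a b. a \<leftarrow> as, b \<leftarrow> bs]. u i * cnj (u j))" by (rule sum_list_comp[symmetric])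
    finally show "(\<Sum>(P, Q)\<leftarrow>pq # ps. P $$ (i div d, j div d) * Q $$ (i mod d, j mod d)) = (\<Sum>u\<leftarrow>us'. u i * cnj (u j))"
      using us(2) i j unfolding us'_def pq by simp
  qed
  then show ?case using good by blast
qed


lemma psdS_cong:
  assumes "\<And>i j. i \<in> I \<Longrightarrow> j \<in> I \<Longrightarrow> A i j = B i j"
  shows "psdS I A \<longleftrightarrow> psdS I B"
proof -
  have "\<And>v. qf I A v = qf I B v" unfolding qf_def using assms by (intro sum.cong refl) auto
  then show ?thesis unfolding psdS_def by simp
qed

lemma psdS_psd:
  assumes "Y \<in> carrier_mat M M" "psdS {..<M} (\<lambda>i j. Y $$ (i, j))"
  shows "psd M Y"
  unfolding psd_def Let_def
proof (rule conjI[OF assms(1)], rule ballI)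
  fix v :: "complex vec" assume "v \<in> carrier_vec M"
  have "(\<Sum>i<M. \<Sum>j<M. cnj (v $ i) * Y $$ (i, j) * v $ j) = qf {..<M} (\<lambda>i j. Y $$ (i, j)) (\<lambda>i. v $ i)"
    unfolding qf_def ..
  then show "Im (\<Sum>i<M. \<Sum>j<M. cnj (v $ i) * Y $$ (i, j) * v $ j) = 0 \<and>
         0 \<le> Re (\<Sum>i<M. \<Sum>j<M. cnj (v $ i) * Y $$ (i, j) * v $ j)"
    using assms(2) unfolding psdS_def by simp
qed

lemma decL_foldr:
  assumes "X \<in> carrier_mat N N" "decL {..<N} (\<lambda>i j. X $$ (i, j)) us"
  shows "X = foldr (\<lambda>(p, v) acc. complex_of_real p \<cdot>\<^sub>m outer v + acc) (map (\<lambda>u. (1, vec N u)) us) (0\<^sub>m N N)"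
  unfolding foldr_outer_list using assms unfolding decL_def by (intro eq_matI) auto

lemma sn_le:
  assumes "X \<in> carrier_mat (a * b) (a * b)" "decL {..<a * b} (\<lambda>i j. X $$ (i, j)) us"
    "\<And>u. u \<in> set us \<Longrightarrow> schmidt_rank a b (vec (a * b) u) \<le> r"
  shows "schmidt_number a b X \<le> r"
  unfolding schmidt_number_def
proof (rule Least_le)
  show "\<exists>ds :: (real \<times> complex vec) list.
      (\<forall>(p, v) \<in> set ds. p > 0 \<and> v \<in> carrier_vec (a * b) \<and> schmidt_rank a b v \<le> r) \<and>
      X = foldr (\<lambda>(p, v) acc. complex_of_real p \<cdot>\<^sub>m outer v + acc) ds (0\<^sub>m (a * b) (a * b))"
    by (rule exI[of _ "map (\<lambda>u. (1, vec (a * b) u)) us"]) (use assms decL_foldr[OF assms(1,2)] in auto)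
qed

theorem theorem18:
  fixes d1 d2 k :: nat and X :: "complex mat"
  assumes "d1 \<le> d2"
    and "psd (d1 * d2) X"
    and "X \<noteq> 0\<^sub>m (d1 * d2) (d1 * d2)"
    and "schmidt_number d1 d2 X = k"
    and "k \<ge> 2"
  shows "\<exists>m :: nat \<Rightarrow> nat. inj_on m {..<d1 - k + 2} \<and> m ` {..<d1 - k + 2} \<subseteq> {..<d1} \<and>
           entangled (d1 - k + 2) d2 (principal_subblock (d1 - k + 2) d2 m X)"
proof -
  define N where "N = d1 * d2"
  define n where "n = d1 - k + 2"
  define A where "A = (\<lambda>i j. X $$ (i, j))"
  have Xc: "X \<in> carrier_mat N N" using assms(2) unfolding psd_def N_def by simp
  have pA: "psdS {..<N} A" unfolding A_def N_def by (rule psd_psdS[OF assms(2)])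
  obtain ws0 where ws0: "decL {..<N} A ws0" using psdS_decomp[OF pA] by blast
  have "schmidt_number d1 d2 X \<le> d1"
    by (rule sn_le[of _ _ _ ws0]) (use Xc ws0 sr_le_a in \<open>auto simp: N_def A_def\<close>)
  then have kd: "k \<le> d1" using assms(4) by simp
  have nd: "n \<le> d1" and n2: "2 \<le> n" using kd assms(5) unfolding n_def by auto
  have nN: "n * d2 \<le> N" unfolding N_def using nd by simp
  define Y where "Y = principal_subblock n d2 id X"
  have Yc: "Y \<in> carrier_mat (n * d2) (n * d2)" unfolding Y_def principal_subblock_def by simp
  have Yent: "\<And>i j. i < n * d2 \<Longrightarrow> j < n * d2 \<Longrightarrow> Y $$ (i, j) = A i j"
    unfolding Y_def principal_subblock_def A_def by simp
  have psdY: "psd (n * d2) Y"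
  proof (rule psdS_psd[OF Yc])
    have "psdS {..<n * d2} A" by (rule psdS_mono[OF _ _ pA]) (use nN in auto)
    moreover have "psdS {..<n * d2} (\<lambda>i j. Y $$ (i, j)) \<longleftrightarrow> psdS {..<n * d2} A"
      by (rule psdS_cong) (simp add: Yent)
    ultimately show "psdS {..<n * d2} (\<lambda>i j. Y $$ (i, j))" by simp
  qed
  have nsep: "\<not> separable n d2 Y"
  proof
    assume "separable n d2 Y"
    then obtain ps where ps: "\<forall>(P, Q)\<in>set ps. psd n P \<and> psd d2 Q"
      "Y = foldr (\<lambda>(P, Q) acc. kron P Q + acc) ps (0\<^sub>m (n * d2) (n * d2))"
      unfolding separable_def by blast
    have car: "\<forall>(P, Q)\<in>set ps. P \<in> carrier_mat n n \<and> Q \<in> carrier_mat d2 d2"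
      using ps(1) unfolding psd_def by auto
    obtain us where us: "\<forall>u\<in>set us. good n d2 u" "\<forall>i<n * d2. \<forall>j<n * d2.
     (\<Sum>(P, Q)\<leftarrow>ps. P $$ (i div d2, j div d2) * Q $$ (i mod d2, j mod d2)) = (\<Sum>u\<leftarrow>us. u i * cnj (u j))"
      using sep_decomp[OF ps(1)] by blast
    have dJ: "decL {..<n * d2} A us"
      unfolding decL_def
    proof (intro ballI)
      fix i j assume i: "i \<in> {..<n * d2}" and j: "j \<in> {..<n * d2}"
      have "A i j = Y $$ (i, j)" using Yent i j by simp
      also have "\<dots> = (\<Sum>(P, Q)\<leftarrow>ps. P $$ (i div d2, j div d2) * Q $$ (i mod d2, j mod d2))"
        unfolding ps(2) foldr_kron[OF car] using i j by simp
      also have "\<dots> = (\<Sum>u\<leftarrow>us. u i * cnj (u j))" using us(2) i j by simp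
      finally show "A i j = (\<Sum>u\<leftarrow>us. u i * cnj (u j))" .
    qed
    have un: "{..<n * d2} \<union> {n * d2..<N} = {..<N}" using nN by auto
    have ex: "\<exists>vs ws. decL ({..<n * d2} \<union> {n * d2..<N}) A (vs @ ws) \<and>
      list_all2 (\<lambda>u v. \<forall>j\<in>{..<n * d2}. v j = u j) us vs \<and>
      (\<forall>w\<in>set ws. \<forall>j\<in>{..<n * d2}. w j = 0)"
    proof (rule decL_extend)
      show "psdS ({..<n * d2} \<union> {n * d2..<N}) A" unfolding un by (rule pA)
    qed (simp_all add: dJ disjoint_iff)
    then obtain vs ws where vw: "decL ({..<n * d2} \<union> {n * d2..<N}) A (vs @ ws)"
      "list_all2 (\<lambda>u v. \<forall>j\<in>{..<n * d2}. v j = u j) us vs"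
      "\<forall>w\<in>set ws. \<forall>j\<in>{..<n * d2}. w j = 0" by blast
    have goodall: "\<And>u. u \<in> set (vs @ ws) \<Longrightarrow> good n d2 u"
    proof -
      fix v assume "v \<in> set (vs @ ws)"
      then consider "v \<in> set vs" | "v \<in> set ws" by auto
      then show "good n d2 v"
      proof cases
        case 1
        then obtain t where t: "t < length vs" "v = vs ! t" by (auto simp: in_set_conv_nth)
        have agree: "\<forall>j\<in>{..<n * d2}. v j = (us ! t) j" and ut: "us ! t \<in> set us"
          using vw(2) t by (auto simp: list_all2_conv_all_nth)
        obtain \<alpha> \<beta> where ab: "\<forall>i<n. \<forall>p<d2. (us ! t) (i * d2 + p) = \<alpha> i * \<beta> p"
          using us(1) ut unfolding good_def by blast
        show ?thesis unfolding good_def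
          by (rule exI[of _ \<alpha>], rule exI[of _ \<beta>]) (use agree ab idx_lt in auto)
      next
        case 2
        show ?thesis unfolding good_def
          by (rule exI[of _ "\<lambda>_. 0"], rule exI[of _ "\<lambda>_. 0"]) (use vw(3) 2 idx_lt in auto)
      qed
    qed
    have "schmidt_number d1 d2 X \<le> 1 + (d1 - n)"
      by (rule sn_le[of _ _ _ "vs @ ws"]) (use Xc vw(1) un goodall sr_good nd in \<open>auto simp: N_def A_def\<close>)
    then show False using assms(4,5) kd unfolding n_def by simp
  qed
  show ?thesis
    by (rule exI[of _ id]) (use nd psdY nsep in \<open>auto simp: entangled_def Y_def n_def\<close>)
qed

end
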